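(* Let $L$ be a real-valued Lévy process with characteristic triplet $(b,0,F)$ whose symbol $A$ satisfies the Gårding condition with index $Y\in(0,2)$, i.e. there exist constants $C_2>0$, $C_3\ge0$ and $0\le Y'<Y$ with $\Re(A(u))\ge C_2|u|^Y-C_3(1+u^2)^{Y'/2}$ for all $u\in\mathds R$. Then $\int_{-1}^1|x|^\alpha F(dx)=\infty$ for all $\alpha<Y$. In particular, the Blumenthal–Getoor index $\beta$ of $L$ satisfies $\beta\ge Y$.
   Context: The symbol of $L$ (w.r.t. a truncation function $h$) is $A(u)=iub-\int(e^{-iuy}-1+iuh(y))F(dy)$, so $\Re(A(u))=\int(1-\cos(uy))F(dy)$. The Blumenthal–Getoor index is $\beta:=\inf\{\alpha>0:\int_{[-1,1]}|x|^\alpha F(dx)<\infty\}$. *)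

theory Defs
  imports "HOL-Analysis.Analysis"
begin

definition levy_measure :: "real measure \<Rightarrow> bool" where
  "levy_measure F \<longleftrightarrow> sets F = sets borel \<and> emeasure F {0} = 0 \<and>
     (\<integral>\<^sup>+ x. ennreal (min 1 (x\<^sup>2)) \<partial>F) < \<infinity>"

definition truncation_function :: "(real \<Rightarrow> real) \<Rightarrow> bool" where
  "truncation_function h \<longleftrightarrow> h \<in> borel_measurable borel \<and> bounded (range h) \<and>
     (\<exists>e>0. \<forall>x. \<bar>x\<bar> < e \<longrightarrow> h x = x)"

definition levy_symbol :: "real \<Rightarrow> real measure \<Rightarrow> (real \<Rightarrow> real) \<Rightarrow> real \<Rightarrow> complex" where
  "levy_symbol b F h u =
     \<i> * complex_of_real u * complex_of_real b -
     (\<integral> y. (exp (- \<i> * complex_of_real (u * y)) - 1 + \<i> * complex_of_real (u * h y)) \<partial>F)"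

text \<open>Blumenthal--Getoor index (extended real; infimum of the empty set is infinity).\<close>
definition bg_index :: "real measure \<Rightarrow> ereal" where
  "bg_index F = Inf {ereal \<alpha> | \<alpha>. \<alpha> > 0 \<and>
     (\<integral>\<^sup>+ x. ennreal (\<bar>x\<bar> powr \<alpha>) * indicator {-1..1} x \<partial>F) < \<infinity>}"

end

theory Submission
  imports Defs
begin

lemma one_minus_cos_le: "1 - cos (t::real) \<le> t\<^sup>2 / 2"
proof -
  have "cos t = 1 - 2 * (sin (t/2))\<^sup>2" using cos_double_sin[of "t/2"] by simp
  moreover have "\<bar>sin (t/2)\<bar> \<le> \<bar>t/2\<bar>" by (rule abs_sin_x_le_abs_x)
  hence "(sin (t/2))\<^sup>2 \<le> (t/2)\<^sup>2"
    by (metis abs_ge_zero power2_abs power_mono)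
  ultimately show ?thesis by (simp add: power_divide)
qed

lemma cos_bound_powr:
  assumes a: "0 < a" "a \<le> 2"
  shows "1 - cos (t::real) \<le> 2 * \<bar>t\<bar> powr a"
proof (cases "\<bar>t\<bar> \<ge> 1")
  case True
  have "1 \<le> \<bar>t\<bar> powr a" using True a by (simp add: ge_one_powr_ge_zero)
  moreover have "cos t \<ge> -1" by simp
  ultimately show ?thesis by linarith
next
  case False
  have "t\<^sup>2 = \<bar>t\<bar> powr 2" by (simp add: powr_numeral)
  also have "\<dots> \<le> \<bar>t\<bar> powr a" using False a by (intro powr_mono') auto
  finally show ?thesis using one_minus_cos_le[of t] 
    using powr_ge_zero[of "\<bar>t\<bar>" a] by linarith
qed

lemma re_bound:
  assumes levy: "levy_measure F" and a: "0 < a" "a \<le> 2"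
    and N: "(\<integral>\<^sup>+ x. ennreal (\<bar>x\<bar> powr a) * indicator {-1..1} x \<partial>F) < \<infinity>"
  shows "Re (levy_symbol b F h u) \<le>
     2 * \<bar>u\<bar> powr a * enn2real (\<integral>\<^sup>+ x. ennreal (\<bar>x\<bar> powr a) * indicator {-1..1} x \<partial>F)
     + 2 * enn2real (emeasure F {x. 1 < \<bar>x\<bar>})"
proof -
  define N where "N = (\<integral>\<^sup>+ x. ennreal (\<bar>x\<bar> powr a) * indicator {-1..1} x \<partial>F)"
  define P where "P = emeasure F {x. 1 < \<bar>x\<bar>}"
  have sF: "sets F = sets borel" using levy unfolding levy_measure_def by auto
  have m1: "(\<lambda>y. ennreal (\<bar>y\<bar> powr a) * indicator {-1..1} y) \<in> borel_measurable F"
   and m2: "(\<lambda>y. indicator {x::real. 1 < \<bar>x\<bar>} y :: ennreal) \<in> borel_measurable F"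
    by (subst measurable_cong_sets[OF sF refl], measurable)+
  have Pset: "{x::real. 1 < \<bar>x\<bar>} \<in> sets F" unfolding sF by measurable
  have "P = (\<integral>\<^sup>+ x. indicator {x. 1 < \<bar>x\<bar>} x \<partial>F)"
    unfolding P_def using Pset by simp
  also have "\<dots> \<le> (\<integral>\<^sup>+ x. ennreal (min 1 (x\<^sup>2)) \<partial>F)"
  proof (rule nn_integral_mono)
    fix x :: real
    show "indicator {x. 1 < \<bar>x\<bar>} x \<le> ennreal (min 1 (x\<^sup>2))"
    proof (cases "1 < \<bar>x\<bar>")
      case True
      hence "1 < x\<^sup>2" by (metis abs_ge_zero less_1_mult power2_abs power2_eq_square)
      thus ?thesis using True by (simp add: indicator_def)
    qed (simp add: indicator_def)
  qed
  also have "\<dots> < \<infinity>" using levy unfolding levy_measure_def by auto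
  finally have Pfin: "P < \<infinity>" .
  have Nfin: "N < \<infinity>" using N unfolding N_def .
  define B where "B = 2 * \<bar>u\<bar> powr a * enn2real N + 2 * enn2real P"
  have B0: "0 \<le> B" unfolding B_def by simp
  define f where "f = (\<lambda>y. exp (- \<i> * complex_of_real (u * y)) - 1 + \<i> * complex_of_real (u * h y))"
  have ReA: "Re (levy_symbol b F h u) = - Re (integral\<^sup>L F f)"
    unfolding levy_symbol_def f_def by simp
  show ?thesis
  proof (cases "integrable F f")
    case False
    then show ?thesis using B0 ReA unfolding B_def N_def P_def
      by (simp add: not_integrable_integral_eq)
  next
    case True
    have "Re (integral\<^sup>L F f) = integral\<^sup>L F (\<lambda>y. Re (f y))"
      using True by simp
    also have "(\<lambda>y. Re (f y)) = (\<lambda>y. cos (u * y) - 1)"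
      unfolding f_def by (auto simp: Re_exp)
    finally have "Re (levy_symbol b F h u) = integral\<^sup>L F (\<lambda>y. 1 - cos (u * y))"
      using ReA by (simp add: integral_minus[symmetric] del: integral_minus)
    also have "\<dots> \<le> B"
    proof (rule integral_real_bounded[OF B0])
      have "(\<integral>\<^sup>+ y. ennreal (1 - cos (u * y)) \<partial>F) \<le>
        (\<integral>\<^sup>+ y. ennreal (2 * \<bar>u\<bar> powr a) * (ennreal (\<bar>y\<bar> powr a) * indicator {-1..1} y)
              + 2 * indicator {x. 1 < \<bar>x\<bar>} y \<partial>F)"
      proof (rule nn_integral_mono)
        fix y :: real
        show "ennreal (1 - cos (u * y)) \<le> ennreal (2 * \<bar>u\<bar> powr a) * (ennreal (\<bar>y\<bar> powr a) * indicator {-1..1} y)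
              + 2 * indicator {x. 1 < \<bar>x\<bar>} y"
        proof (cases "\<bar>y\<bar> \<le> 1")
          case True
          have "1 - cos (u * y) \<le> 2 * \<bar>u\<bar> powr a * \<bar>y\<bar> powr a"
            using cos_bound_powr[OF a, of "u*y"] by (simp add: abs_mult powr_mult)
          hence "ennreal (1 - cos (u * y)) \<le> ennreal (2 * \<bar>u\<bar> powr a) * ennreal (\<bar>y\<bar> powr a)"
            by (simp add: ennreal_mult[symmetric] ennreal_leI)
          thus ?thesis using True by (auto simp: indicator_def abs_le_iff)
        next
          case False
          have "1 - cos (u*y) \<le> 2" using cos_ge_minus_one[of "u*y"] by linarith
          hence "ennreal (1 - cos (u*y)) \<le> ennreal 2" by (rule ennreal_leI)
          hence "ennreal (1 - cos (u * y)) \<le> 2" by simp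
          thus ?thesis using False by (auto simp: indicator_def)
        qed
      qed
      also have "\<dots> = ennreal (2 * \<bar>u\<bar> powr a) * N + 2 * P"
        unfolding N_def P_def
        apply (subst nn_integral_add)
        using m1 m2 apply (auto intro!: borel_measurable_times_ennreal)[2]
        apply (subst nn_integral_cmult, fact m1)
        apply (subst nn_integral_cmult, fact m2)
        using Pset by simp
      also have "\<dots> = ennreal B"
        unfolding B_def using Nfin Pfin
        by (simp add: ennreal_plus ennreal_mult less_top ennreal_enn2real)
      finally show "(\<integral>\<^sup>+ y. ennreal (1 - cos (u * y)) \<partial>F) \<le> ennreal B" .
    qed
    finally show ?thesis unfolding B_def N_def P_def .
  qed
qed

theorem mainTheorem10:
  fixes b :: real and F :: "real measure" and h :: "real \<Rightarrow> real"
    and Y Y' C2 C3 :: real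
  assumes levy: "levy_measure F"
    and trunc: "truncation_function h"
    and Y: "0 < Y" "Y < 2"
    and C2: "C2 > 0" and C3: "C3 \<ge> 0"
    and Y': "0 \<le> Y'" "Y' < Y"
    and garding: "\<And>u. Re (levy_symbol b F h u) \<ge> C2 * \<bar>u\<bar> powr Y - C3 * (1 + u\<^sup>2) powr (Y' / 2)"
  shows "(\<forall>\<alpha>::real. \<alpha> < Y \<longrightarrow>
            (\<integral>\<^sup>+ x. ennreal (\<bar>x\<bar> powr \<alpha>) * indicator {-1..1} x \<partial>F) = \<infinity>)
         \<and> bg_index F \<ge> ereal Y"
proof -
  have part1: "(\<integral>\<^sup>+ x. ennreal (\<bar>x\<bar> powr \<alpha>0) * indicator {-1..1} x \<partial>F) = \<infinity>"
    if a0: "\<alpha>0 < Y" for \<alpha>0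
  proof (rule ccontr)
    assume "(\<integral>\<^sup>+ x. ennreal (\<bar>x\<bar> powr \<alpha>0) * indicator {-1..1} x \<partial>F) \<noteq> \<infinity>"
    hence N0: "(\<integral>\<^sup>+ x. ennreal (\<bar>x\<bar> powr \<alpha>0) * indicator {-1..1} x \<partial>F) < \<infinity>"
      by (simp add: less_top)
    define a where "a = max \<alpha>0 ((Y + Y') / 2)"
    have a: "0 < a" "a \<le> 2" "a < Y" "Y' \<le> a" "\<alpha>0 \<le> a"
      unfolding a_def using Y Y' a0 by (auto simp: max_def)
    have "(\<integral>\<^sup>+ x. ennreal (\<bar>x\<bar> powr a) * indicator {-1..1} x \<partial>F)
       \<le> (\<integral>\<^sup>+ x. ennreal (\<bar>x\<bar> powr \<alpha>0) * indicator {-1..1} x \<partial>F)"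
    proof (rule nn_integral_mono)
      fix x :: real
      show "ennreal (\<bar>x\<bar> powr a) * indicator {-1..1} x \<le> ennreal (\<bar>x\<bar> powr \<alpha>0) * indicator {-1..1} x"
      proof (cases "x \<in> {-1..1}")
        case True
        hence "\<bar>x\<bar> powr a \<le> \<bar>x\<bar> powr \<alpha>0"
          using a by (intro powr_mono') auto
        thus ?thesis using True by (simp add: ennreal_leI)
      qed simp
    qed
    hence N: "(\<integral>\<^sup>+ x. ennreal (\<bar>x\<bar> powr a) * indicator {-1..1} x \<partial>F) < \<infinity>"
      using N0 by (meson order.strict_trans1)
    define m where "m = enn2real (\<integral>\<^sup>+ x. ennreal (\<bar>x\<bar> powr a) * indicator {-1..1} x \<partial>F)"
    define p where "p = enn2real (emeasure F {x. 1 < \<bar>x\<bar>})"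
    have m0: "0 \<le> m" and p0: "0 \<le> p" unfolding m_def p_def by auto
    define D where "D = 2 * m + 2 * p + 4 * C3"
    have D0: "0 \<le> D" unfolding D_def using m0 p0 C3 by simp
    have key: "C2 * u powr Y \<le> D * u powr a" if u: "1 \<le> u" for u :: real
    proof -
      have ua: "1 \<le> u powr a" using u a by (simp add: ge_one_powr_ge_zero)
      have "(1 + u\<^sup>2) powr (Y' / 2) \<le> ((2 * u) powr 2) powr (Y' / 2)"
      proof (rule powr_mono2)
        show "1 + u\<^sup>2 \<le> (2 * u) powr 2"
        proof -
          have "1 \<le> u * u" using u by (metis mult_mono' order.trans zero_le_one mult_1_left)
          thus ?thesis using u by (simp add: powr_numeral power2_eq_square)
        qed
      qed (use Y' in auto)
      also have "\<dots> = (2 * u) powr Y'" by (simp add: powr_powr)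
      also have "\<dots> \<le> (2 * u) powr a" using u a by (intro powr_mono) auto
      also have "\<dots> = 2 powr a * u powr a" using u by (simp add: powr_mult)
      also have "\<dots> \<le> 4 * u powr a"
      proof (rule mult_right_mono)
        have "2 powr a \<le> 2 powr (2::real)" using a by (intro powr_mono) auto
        thus "2 powr a \<le> 4" by simp
      qed simp
      finally have c3: "(1 + u\<^sup>2) powr (Y' / 2) \<le> 4 * u powr a" .
      have "C2 * \<bar>u\<bar> powr Y - C3 * (1 + u\<^sup>2) powr (Y' / 2) \<le> 2 * \<bar>u\<bar> powr a * m + 2 * p"
        using garding[of u] re_bound[OF levy a(1,2) N, of b h u] unfolding m_def p_def by linarith
      moreover have "C3 * (1 + u\<^sup>2) powr (Y' / 2) \<le> C3 * (4 * u powr a)"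
        using c3 C3 by (rule mult_left_mono)
      moreover have "p \<le> p * u powr a" using p0 ua
        by (metis mult.right_neutral mult_left_mono)
      ultimately have "C2 * u powr Y \<le> 2 * u powr a * m + 2 * (p * u powr a) + C3 * (4 * u powr a)"
        using u by simp
      thus ?thesis unfolding D_def by (simp add: algebra_simps)
    qed
    define u where "u = (D / C2 + 1) powr (1 / (Y - a))"
    have base: "1 \<le> D / C2 + 1" using D0 C2 by simp
    have u1: "1 \<le> u" unfolding u_def using base a by (simp add: ge_one_powr_ge_zero)
    have uYa: "u powr (Y - a) = D / C2 + 1"
      unfolding u_def using a base by (simp add: powr_powr)
    have "C2 * (u powr (Y - a) * u powr a) \<le> D * u powr a"
      using key[OF u1] u1 by (simp add: powr_add[symmetric])
    hence "C2 * u powr (Y - a) \<le> D"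
      using u1 by (simp add: mult.assoc[symmetric])
    moreover have "C2 * u powr (Y - a) = D + C2" using uYa C2 by (simp add: field_simps)
    ultimately show False using C2 by linarith
  qed
  have part2: "bg_index F \<ge> ereal Y"
    unfolding bg_index_def
  proof (rule Inf_greatest)
    fix z assume "z \<in> {ereal \<alpha> | \<alpha>. \<alpha> > 0 \<and>
     (\<integral>\<^sup>+ x. ennreal (\<bar>x\<bar> powr \<alpha>) * indicator {-1..1} x \<partial>F) < \<infinity>}"
    then obtain \<alpha> where "z = ereal \<alpha>" "(\<integral>\<^sup>+ x. ennreal (\<bar>x\<bar> powr \<alpha>) * indicator {-1..1} x \<partial>F) < \<infinity>"
      by auto
    thus "ereal Y \<le> z" using part1[of \<alpha>] by (cases "\<alpha> < Y") auto
  qed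
  show ?thesis using part1 part2 by blast
qed

end
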